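(* Let $n\ge2$, $m\in\mathbb{Z}_{>0}$, $q\in(-1,1)$. For every $\mu\in\Lambda^{(m+1,n)}_{\texttt{a}}\setminus\Lambda^{(m,n)}_{\texttt{a}}$ define \[ Q_{\texttt{a};\mu}(\boldsymbol{\xi})=P_{\texttt{a};\mu}(\boldsymbol{\xi};q)-q^{\mathrm{m}_{\mu_1}(\mu)\,\mathrm{m}_{\mu_n}(\mu)}P_{\texttt{a};\mu-\omega_{\texttt{a};\mu}}(\boldsymbol{\xi};q),\quad \omega_{\texttt{a};\mu}=\sum_{j=1}^{\min(\mathrm{m}_{\mu_1}(\mu),\mathrm{m}_{\mu_n}(\mu))}\bigl(e_{\mathrm{m}_{\mu_1}(\mu)+1-j}-e_{n-\mathrm{m}_{\mu_n}(\mu)+j}\bigr). \] Then $Q_{\texttt{a};\mu}(\boldsymbol{\xi}^{(m,n)}_{\texttt{a};\lambda})=0$ for all $\lambda\in\Lambda^{(m,n)}_{\texttt{a}}$ and all $\mu\in\Lambda^{(m+1,n)}_{\texttt{a}}\setminus\Lambda^{(m,n)}_{\texttt{a}}$; i.e. the nodes are common roots of these $\binom{m+n-1}{m+1}$ polynomials.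
   Context: $\mathrm{m}_x(\mathbf{x})=|\{1\le j\le n: x_j=x\}|$ for $\mathbf{x}\in\mathbb{R}^n$. Let $e_1,\dots,e_n$ be the standard basis of $\mathbb{R}^n$, $\omega_j=e_1+\dots+e_j-\frac{j}{n}(e_1+\dots+e_n)$ ($j=1,\dots,n-1$), and for an integer $D\ge0$, $\Lambda^{(D,n)}_{\texttt{a}}=\{l_1\omega_1+\dots+l_{n-1}\omega_{n-1}: l_j\in\mathbb{Z}_{\ge0},\ l_1+\dots+l_{n-1}\le D\}$. For $\mu$ in the $\mathbb{Z}$-span of the $\omega_j$: $C_{\texttt{a}}(\boldsymbol{\xi};q)=\prod_{1\le j<k\le n}\frac{1-qe^{-i(\xi_j-\xi_k)}}{1-e^{-i(\xi_j-\xi_k)}}$, $P_{\texttt{a};\mu}(\boldsymbol{\xi};q)=\sum_{\sigma\in S_n}C_{\texttt{a}}(\xi_{\sigma_1},\dots,\xi_{\sigma_n};q)\exp(i\sum_j\xi_{\sigma_j}\mu_j)$. Let $u_q(\theta)=\frac{1-q^2}{1-2q\cos\theta+q^2}$, $v_q(\vartheta)=\int_0^\vartheta u_q(\theta)\,\mathrm{d}\theta$, $\varrho_{\texttt{a};j}=\frac12(n+1-2j)$. For $\lambda\in\Lambda^{(m,n)}_{\texttt{a}}$, $\boldsymbol{\xi}^{(m,n)}_{\texttt{a};\lambda}\in\mathbb{R}^n$ is the unique solution of $m\xi_j+\sum_{k\ne j}v_q(\xi_j-\xi_k)=2\pi(\lambda_j+\varrho_{\texttt{a};j})$, $j=1,\dots,n$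 (the unique minimizer of an associated strictly convex function). *)

theory Defs
  imports "HOL-Analysis.Analysis" "HOL-Combinatorics.Permutations"
begin

text \<open>Vectors in R^n are represented as functions nat => real; only the
  coordinates 1..n are meaningful (all constructed vectors vanish outside 1..n).\<close>

definition multiplicity_in :: "real \<Rightarrow> (nat \<Rightarrow> real) \<Rightarrow> nat \<Rightarrow> nat" where
  "multiplicity_in x v n = card {j \<in> {1..n}. v j = x}"

definition std_basis :: "nat \<Rightarrow> nat \<Rightarrow> nat \<Rightarrow> real" where
  "std_basis n j = (\<lambda>k. if k = j \<and> 1 \<le> k \<and> k \<le> n then 1 else 0)"

definition fund_weight :: "nat \<Rightarrow> nat \<Rightarrow> nat \<Rightarrow> real" where
  "fund_weight n j = (\<lambda>k. if 1 \<le> k \<and> k \<le> n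
      then (if k \<le> j then 1 else 0) - real j / real n else 0)"

definition Lambda_a :: "nat \<Rightarrow> nat \<Rightarrow> (nat \<Rightarrow> real) set" where
  "Lambda_a D n = {(\<lambda>k. \<Sum>j\<in>{1..n-1}. real (l j) * fund_weight n j k) | l :: nat \<Rightarrow> nat.
                     (\<Sum>j\<in>{1..n-1}. l j) \<le> D}"

definition C_a :: "nat \<Rightarrow> (nat \<Rightarrow> real) \<Rightarrow> real \<Rightarrow> complex" where
  "C_a n xi q = (\<Prod>(j,k)\<in>{(j,k). 1 \<le> j \<and> j < k \<and> k \<le> n}.
      (1 - complex_of_real q * exp (- \<i> * complex_of_real (xi j - xi k)))
      / (1 - exp (- \<i> * complex_of_real (xi j - xi k))))"

definition P_a :: "nat \<Rightarrow> (nat \<Rightarrow> real) \<Rightarrow> (nat \<Rightarrow> real) \<Rightarrow> real \<Rightarrow> complex" where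
  "P_a n mu xi q = (\<Sum>\<sigma>\<in>{\<sigma>. \<sigma> permutes {1..n}}.
      C_a n (xi \<circ> \<sigma>) q * exp (\<i> * complex_of_real (\<Sum>j\<in>{1..n}. xi (\<sigma> j) * mu j)))"

definition u_q :: "real \<Rightarrow> real \<Rightarrow> real" where
  "u_q q \<theta> = (1 - q^2) / (1 - 2 * q * cos \<theta> + q^2)"

text \<open>Signed integral from 0 to the upper limit.\<close>
definition v_q :: "real \<Rightarrow> real \<Rightarrow> real" where
  "v_q q th = (LBINT \<theta>=ereal 0..ereal th. u_q q \<theta>)"

definition rho_a :: "nat \<Rightarrow> nat \<Rightarrow> real" where
  "rho_a n j = (real n + 1 - 2 * real j) / 2"

definition is_node :: "nat \<Rightarrow> nat \<Rightarrow> real \<Rightarrow> (nat \<Rightarrow> real) \<Rightarrow> (nat \<Rightarrow> real) \<Rightarrow> bool" where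
  "is_node m n q lam xi \<longleftrightarrow>
     (\<forall>j\<in>{1..n}. real m * xi j + (\<Sum>k\<in>{1..n} - {j}. v_q q (xi j - xi k))
                 = 2 * pi * (lam j + rho_a n j))"

definition omega_mu :: "nat \<Rightarrow> (nat \<Rightarrow> real) \<Rightarrow> nat \<Rightarrow> real" where
  "omega_mu n mu = (let a = multiplicity_in (mu 1) mu n; b = multiplicity_in (mu n) mu n in
     (\<lambda>k. \<Sum>j\<in>{1..min a b}. std_basis n (a + 1 - j) k - std_basis n (n - b + j) k))"

definition Q_a :: "nat \<Rightarrow> (nat \<Rightarrow> real) \<Rightarrow> (nat \<Rightarrow> real) \<Rightarrow> real \<Rightarrow> complex" where
  "Q_a n mu xi q = P_a n mu xi q
     - complex_of_real (q ^ (multiplicity_in (mu 1) mu n * multiplicity_in (mu n) mu n))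
       * P_a n (\<lambda>k. mu k - omega_mu n mu k) xi q"

end

theory Submission
  imports Defs
begin

lemma exp_i_real: "exp (\<i> * complex_of_real x) = complex_of_real (cos x) + \<i> * complex_of_real (sin x)"
  unfolding cis_conv_exp[symmetric] by (simp add: complex_eq_iff)

lemma exp_2arctan: "exp (\<i> * complex_of_real (2 * arctan t)) = (1 + \<i> * t) / (1 - \<i> * t)"
proof -
  define s where "s = sqrt (1 + t^2)"
  have s: "s > 0" "s^2 = 1 + t^2" unfolding s_def by (auto simp: add_pos_nonneg)
  have c: "cos (arctan t) = 1 / s" "sin (arctan t) = t / s"
    by (simp_all add: s_def cos_arctan sin_arctan)
  have "exp (\<i> * complex_of_real (2 * arctan t)) = (exp (\<i> * complex_of_real (arctan t)))^2"
    by (simp add: exp_double[symmetric] algebra_simps)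
  also have "\<dots> = ((1 + \<i> * t) / s)^2"
    by (simp add: exp_i_real c add_divide_distrib)
  also have "\<dots> = (1 + \<i> * t) / (1 - \<i> * t)"
  proof -
    have ne: "1 - \<i> * complex_of_real t \<noteq> 0"
      by (simp add: complex_eq_iff)
    have ne': "1 + \<i> * complex_of_real t \<noteq> 0" by (simp add: complex_eq_iff)
    have sq: "(complex_of_real s)^2 = (1 + \<i> * t) * (1 - \<i> * t)"
    proof -
      have "(complex_of_real s)^2 = complex_of_real (1 + t^2)" by (simp only: s(2) flip: of_real_power)
      also have "\<dots> = (1 + \<i> * t) * (1 - \<i> * t)" by (simp add: complex_eq_iff power2_eq_square)
      finally show ?thesis .
    qed
    have "((1 + \<i> * t) / s)^2 = ((1 + \<i> * t) * (1 + \<i> * t)) / ((1 + \<i> * t) * (1 - \<i> * t))"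
      unfolding power_divide sq by (simp only: power2_eq_square)
    also have "\<dots> = (1 + \<i> * t) / (1 - \<i> * t)"
      by (rule mult_divide_mult_cancel_left[OF ne'])
    finally show ?thesis .
  qed
  finally show ?thesis .
qed
lemma aux1: "(S::real)^2 + C^2 = 1 \<Longrightarrow> (1 - q*C)^2 + (q*S)^2 = 1 - 2*q*C + q^2"
proof -
  assume h: "S^2 + C^2 = 1"
  have "(1 - q*C)^2 + (q*S)^2 = 1 - 2*q*C + q^2*(S^2+C^2)" by (simp add: power2_eq_square algebra_simps)
  then show ?thesis using h by simp
qed

lemma aux2: "(S::real)^2 + C^2 = 1 \<Longrightarrow> q * C * (1 - q * C) - q * S * (q * S) = q * C - q^2"
proof -
  assume h: "S^2 + C^2 = 1"
  have "q * C * (1 - q * C) - q * S * (q * S) = q * C - q^2*(S^2+C^2)" by (simp add: power2_eq_square algebra_simps)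
  then show ?thesis using h by simp
qed

lemma aux3: "(D::real) \<noteq> 0 \<Longrightarrow> P \<noteq> 0 \<Longrightarrow> inverse (P / D^2) * (N / (D*D)) = N / P"
  by (simp add: field_simps power2_eq_square)

lemma den_pos: "\<bar>q\<bar> < 1 \<Longrightarrow> 1 - q * cos x > (0::real)"
proof -
  assume "\<bar>q\<bar> < 1"
  moreover have "\<bar>q * cos x\<bar> \<le> \<bar>q\<bar>" by (simp add: abs_mult mult_left_le)
  ultimately show ?thesis by linarith
qed

lemma den2_pos: "\<bar>q\<bar> < 1 \<Longrightarrow> 1 - 2 * q * cos x + q^2 > (0::real)"
proof -
  assume q: "\<bar>q\<bar> < 1"
  have "1 - 2 * q * cos x + q^2 = (1 - q * cos x)^2 + (q * sin x)^2"
    using aux1[of "sin x" "cos x" q] by simp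
  moreover have "(1 - q * cos x)^2 > 0" using den_pos[OF q, of x] by simp
  ultimately show ?thesis by (smt (verit) zero_le_power2)
qed

definition Fv :: "real \<Rightarrow> real \<Rightarrow> real" where
  "Fv q x = x + 2 * arctan (q * sin x / (1 - q * cos x))"

lemma Fv_deriv: assumes q: "\<bar>q\<bar> < 1" shows "(Fv q has_real_derivative ((1 - q^2) / (1 - 2 * q * cos x + q^2))) (at x)"
proof -
  define g where "g = (\<lambda>x. q * sin x / (1 - q * cos x))"
  have d: "1 - q * cos x \<noteq> 0" using den_pos[OF q] by (metis less_irrefl)
  have dn: "((\<lambda>x. 1 - q * cos x) has_real_derivative q * sin x) (at x)"
    using DERIV_diff[OF DERIV_const DERIV_cmult[OF DERIV_cos, of q]] by simp
  have nm: "((\<lambda>x. q * sin x) has_real_derivative q * cos x) (at x)"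
    using DERIV_cmult[OF DERIV_sin, of q] by simp
  have dg: "(g has_real_derivative (q * cos x * (1 - q * cos x) - q * sin x * (q * sin x)) / ((1 - q * cos x) * (1 - q * cos x))) (at x)"
    unfolding g_def by (rule DERIV_divide[OF nm dn d])
  have da: "((\<lambda>x. arctan (g x)) has_real_derivative inverse (1 + (g x)^2) * ((q * cos x * (1 - q * cos x) - q * sin x * (q * sin x)) / ((1 - q * cos x) * (1 - q * cos x)))) (at x)"
    by (rule DERIV_chain'[OF dg DERIV_arctan])
  have Fveq: "Fv q = (\<lambda>x. x + 2 * arctan (g x))" by (simp add: Fv_def g_def fun_eq_iff)
  have dF: "(Fv q has_real_derivative 1 + 2 * (inverse (1 + (g x)^2) * ((q * cos x * (1 - q * cos x) - q * sin x * (q * sin x)) / ((1 - q * cos x) * (1 - q * cos x))))) (at x)"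
    unfolding Fveq by (rule DERIV_add[OF DERIV_ident DERIV_cmult[OF da]])
  have e: "(1 - q * cos x)^2 + (q * sin x)^2 = 1 - 2 * q * cos x + q^2"
    by (rule aux1) simp
  have p: "1 - 2 * q * cos x + q^2 > 0" by (rule den2_pos[OF q])
  have n1: "q * cos x * (1 - q * cos x) - q * sin x * (q * sin x) = q * cos x - q^2"
    by (rule aux2) simp
  have gg: "1 + (g x)^2 = (1 - 2 * q * cos x + q^2) / (1 - q * cos x)^2"
  proof -
    have d2: "(1 - q*cos x)^2 \<noteq> 0" using d by simp
    have "1 + (g x)^2 = ((1 - q*cos x)^2 + (q * sin x)^2)/(1-q*cos x)^2"
      unfolding g_def power_divide by (simp only: add_divide_distrib divide_self[OF d2])
    then show ?thesis unfolding e .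
  qed
  have "1 + 2 * (inverse (1 + (g x)^2) * ((q * cos x * (1 - q * cos x) - q * sin x * (q * sin x)) / ((1 - q * cos x) * (1 - q * cos x))))
     = 1 + 2 * (q * cos x - q^2) / (1 - 2 * q * cos x + q^2)"
    unfolding gg n1 using aux3[OF d, of "1 - 2 * q * cos x + q^2" "q * cos x - q^2"] p by simp
  also have "\<dots> = (1 - q^2) / (1 - 2 * q * cos x + q^2)"
    using p by (simp add: field_simps)
  finally show ?thesis using dF by simp
qed

lemma key:
  fixes c s q t :: real and E :: complex
  assumes cs: "c^2 + s^2 = 1" and E: "E = complex_of_real c + \<i> * complex_of_real s"
    and tq: "(1 - q * c) * t = q * s"
    and d1: "1 - \<i> * complex_of_real t \<noteq> 0" and d2: "1 - complex_of_real q * E \<noteq> 0"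
  shows "E * ((1 + \<i> * complex_of_real t) / (1 - \<i> * complex_of_real t)) = (E - complex_of_real q) / (1 - complex_of_real q * E)"
proof -
  have e1: "1 - E^2 = -2*\<i>*complex_of_real s*E"
    using cs unfolding E by (simp add: complex_eq_iff power2_eq_square algebra_simps)
  have e2: "E^2 + 1 = 2*complex_of_real c*E"
    using cs unfolding E by (simp add: complex_eq_iff power2_eq_square algebra_simps)
  have tq': "(1 - complex_of_real q * complex_of_real c) * complex_of_real t = complex_of_real q * complex_of_real s"
    using arg_cong[OF tq, of complex_of_real] by simp
  have "E * (1 + \<i> * complex_of_real t) * (1 - complex_of_real q * E) - (E - complex_of_real q) * (1 - \<i> * complex_of_real t)
     = complex_of_real q * (1 - E^2) + \<i> * complex_of_real t * (2*E - complex_of_real q * (E^2 + 1))"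
    by (simp add: algebra_simps power2_eq_square)
  also have "\<dots> = 2 * \<i> * E * ((1 - complex_of_real q * complex_of_real c) * complex_of_real t - complex_of_real q * complex_of_real s)"
    unfolding e1 e2 by (simp add: algebra_simps)
  also have "\<dots> = 0" using tq' by simp
  finally have "E * (1 + \<i> * complex_of_real t) * (1 - complex_of_real q * E) = (E - complex_of_real q) * (1 - \<i> * complex_of_real t)"
    by simp
  then show ?thesis using d1 d2 by (simp add: divide_simps)
qed

lemma straight_alg:
  fixes W q :: complex assumes W: "W \<noteq> 0"
  shows "(1 - q*W)/(1-W) * (W - q) + (1 - q * inverse W)/(1 - inverse W) * (1 - q*W) = 0"
proof (cases "W = 1")
  case True then show ?thesis by simp
next
  case False
  then have "1 - W \<noteq> 0" "W - 1 \<noteq> 0" by auto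
  then show ?thesis using W by (simp add: field_simps)
qed

lemma swap_alg:
  fixes E q :: complex assumes "E \<noteq> 0" "E \<noteq> 1" "1 - q * E \<noteq> 0"
  shows "(1 - q * inverse E)/(1 - inverse E) = - ((E - q)/(1 - q * E)) * ((1 - q * E)/(1 - E))"
proof -
  have n1: "1 - E \<noteq> 0" "E - 1 \<noteq> 0" using assms by auto
  have r: "- ((E - q)/(1 - q * E)) * ((1 - q * E)/(1 - E)) = (E - q)/(E - 1)"
  proof -
    have "- ((E - q)/(1 - q * E)) * ((1 - q * E)/(1 - E)) = - ((E - q)/(1 - E))"
      using assms(3) n1 by (simp add: minus_divide_left)
    also have "\<dots> = (E - q)/(E - 1)" by (metis minus_diff_eq divide_minus_right)
    finally show ?thesis .
  qed
  have l: "(1 - q * inverse E)/(1 - inverse E) = (E - q)/(E - 1)"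
  proof -
    have "1 - q * inverse E = (E - q) / E" "1 - inverse E = (E - 1) / E"
      using assms(1) by (simp_all add: field_simps)
    then show ?thesis using assms(1) by simp
  qed
  show ?thesis using l r by simp
qed



lemma v_q_eq: assumes q: "\<bar>q\<bar> < 1" shows "v_q q th = Fv q th"
proof -
  have cont: "continuous_on {min 0 th..max 0 th} (u_q q)"
  proof -
    have nz: "\<And>x. 1 - 2 * q * cos x + q^2 \<noteq> 0" using den2_pos[OF q] by (metis less_irrefl)
    show ?thesis unfolding u_q_def by (intro continuous_intros ballI nz)
  qed
  have "(LBINT x=ereal 0..ereal th. u_q q x) = Fv q th - Fv q 0"
    by (rule interval_integral_FTC_finite[OF cont])
       (rule has_vector_derivative_at_within, simp add: has_real_derivative_iff_has_vector_derivative[symmetric] Fv_deriv[OF q, unfolded u_q_def[symmetric]])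
  then show ?thesis by (simp add: v_q_def Fv_def)
qed

lemma exp_v_q: assumes q: "\<bar>q\<bar> < 1"
  shows "exp (\<i> * complex_of_real (v_q q th)) =
    (exp (\<i> * complex_of_real th) - q) / (1 - q * exp (\<i> * complex_of_real th))"
proof -
  define c s where "c = cos th" and "s = sin th"
  define t where "t = q * s / (1 - q * c)"
  define E where "E = complex_of_real c + \<i> * complex_of_real s"
  have cs: "c^2 + s^2 = 1" by (simp add: c_def s_def)
  have d: "1 - q * c > 0" using den_pos[OF q] by (simp add: c_def)
  have tq: "(1 - q * c) * t = q * s" unfolding t_def using d by simp
  have d1: "1 - \<i> * complex_of_real t \<noteq> 0" by (simp add: complex_eq_iff)
  have d2: "1 - complex_of_real q * E \<noteq> 0"
  proof
    assume "1 - complex_of_real q * E = 0"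
    then have "Re (1 - complex_of_real q * E) = 0" by simp
    then show False using d by (simp add: E_def)
  qed
  have Eq: "exp (\<i> * complex_of_real th) = E" by (simp add: E_def exp_i_real c_def s_def)
  have "exp (\<i> * complex_of_real (v_q q th)) = exp (\<i> * complex_of_real th) *
       exp (\<i> * complex_of_real (2 * arctan t))"
    unfolding v_q_eq[OF q] Fv_def c_def s_def t_def
    by (simp only: of_real_add distrib_left exp_add)
  also have "\<dots> = E * ((1 + \<i> * complex_of_real t) / (1 - \<i> * complex_of_real t))"
    unfolding exp_2arctan Eq ..
  also have "\<dots> = (E - complex_of_real q) / (1 - complex_of_real q * E)"
    by (rule key[OF cs E_def tq d1 d2])
  finally show ?thesis unfolding Eq .
qed



definition Pairs :: "nat \<Rightarrow> (nat \<times> nat) set" where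
  "Pairs n = {(j,k). 1 \<le> j \<and> j < k \<and> k \<le> n}"

definition fC :: "real \<Rightarrow> real \<Rightarrow> complex" where
  "fC q th = (1 - complex_of_real q * exp (- \<i> * complex_of_real th)) / (1 - exp (- \<i> * complex_of_real th))"

lemma finite_Pairs: "finite (Pairs n)"
  by (rule finite_subset[of _ "{1..n} \<times> {1..n}"]) (auto simp: Pairs_def)

lemma C_alt: "C_a n y q = (\<Prod>p\<in>Pairs n. fC q (y (fst p) - y (snd p)))"
  unfolding C_a_def Pairs_def fC_def by (simp add: case_prod_beta)

lemma C_swap:
  assumes i: "1 \<le> i" "i < n"
  shows "\<exists>B. C_a n y q = fC q (y i - y (Suc i)) * B \<and>
             C_a n (y \<circ> Transposition.transpose i (Suc i)) q = fC q (y (Suc i) - y i) * B"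
proof -
  define s where "s = Transposition.transpose i (Suc i)"
  define P' where "P' = Pairs n - {(i, Suc i)}"
  have PP: "Pairs n = insert (i, Suc i) P'" "(i, Suc i) \<notin> P'" "finite P'"
    using i finite_Pairs[of n] by (auto simp: P'_def Pairs_def)
  define h where "h = (\<lambda>p. (s (fst p), s (snd p)))"
  have hP: "h ` P' \<subseteq> P'"
    using i unfolding h_def P'_def Pairs_def s_def Transposition.transpose_def by (auto split: if_splits)
  have hh: "\<forall>p\<in>P'. h (h p) = p"
    unfolding h_def s_def Transposition.transpose_def by auto
  have bij: "bij_betw h P' P'"
    by (rule bij_betw_byWitness[OF hh hh hP hP])
  define B where "B = (\<Prod>p\<in>P'. fC q (y (fst p) - y (snd p)))"
  have "C_a n y q = fC q (y i - y (Suc i)) * B"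
    unfolding C_alt PP(1) B_def using PP by simp
  moreover have "C_a n (y \<circ> s) q = fC q (y (Suc i) - y i) * B"
  proof -
    have "C_a n (y \<circ> s) q = fC q (y (Suc i) - y i) * (\<Prod>p\<in>P'. fC q (y (s (fst p)) - y (s (snd p))))"
      unfolding C_alt PP(1) using PP by (simp add: s_def)
    also have "(\<Prod>p\<in>P'. fC q (y (s (fst p)) - y (s (snd p)))) = (\<Prod>p\<in>P'. fC q (y (fst (h p)) - y (snd (h p))))"
      by (simp add: h_def)
    also have "\<dots> = B" unfolding B_def
      by (rule prod.reindex_bij_betw[OF bij])
    finally show ?thesis .
  qed
  ultimately show ?thesis unfolding s_def by blast
qed

definition cyc :: "nat \<Rightarrow> nat \<Rightarrow> nat" where
  "cyc n j = (if 1 \<le> j \<and> j < n then Suc j else if j = n then 1 else j)"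

lemma cyc_permutes: assumes "n \<ge> 1" shows "cyc n permutes {1..n}"
proof (rule bij_imp_permutes)
  define ci where "ci = (\<lambda>j. if 2 \<le> j \<and> j \<le> n then j - 1 else if j = 1 then n else j)"
  show "bij_betw (cyc n) {1..n} {1..n}"
    by (rule bij_betw_byWitness[of _ ci]) (use assms in \<open>auto simp: cyc_def ci_def\<close>)
  show "\<And>x. x \<notin> {1..n} \<Longrightarrow> cyc n x = x" using assms by (auto simp: cyc_def)
qed

lemma C_cyc:
  assumes n: "n \<ge> 2"
  shows "\<exists>A. C_a n y q = (\<Prod>k\<in>{2..n}. fC q (y 1 - y k)) * A \<and>
             C_a n (y \<circ> cyc n) q = (\<Prod>k\<in>{2..n}. fC q (y k - y 1)) * A"
proof -
  define P1 where "P1 = (\<lambda>k. (1::nat, k)) ` {2..n}"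
  define P2 where "P2 = {(j,k). 2 \<le> j \<and> j < k \<and> k \<le> n}"
  define Q1 where "Q1 = (\<lambda>j. (j, n)) ` {1..n-1}"
  define Q2 where "Q2 = {(j,k). 1 \<le> j \<and> j < k \<and> k < n}"
  have fP2: "finite P2" by (rule finite_subset[of _ "{1..n} \<times> {1..n}"]) (auto simp: P2_def)
  have fQ2: "finite Q2" by (rule finite_subset[of _ "{1..n} \<times> {1..n}"]) (auto simp: Q2_def)
  have P: "Pairs n = P1 \<union> P2" "P1 \<inter> P2 = {}"
    by (auto simp: Pairs_def P1_def P2_def)
  have Q: "Pairs n = Q1 \<union> Q2" "Q1 \<inter> Q2 = {}"
    by (auto simp: Pairs_def Q1_def Q2_def)
  define A where "A = (\<Prod>p\<in>P2. fC q (y (fst p) - y (snd p)))"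
  have "C_a n y q = (\<Prod>p\<in>P1. fC q (y (fst p) - y (snd p))) * A"
    unfolding C_alt P(1) A_def by (rule prod.union_disjoint[OF _ fP2 P(2)]) (simp add: P1_def)
  also have "(\<Prod>p\<in>P1. fC q (y (fst p) - y (snd p))) = (\<Prod>k\<in>{2..n}. fC q (y 1 - y k))"
    unfolding P1_def by (subst prod.reindex) (auto simp: inj_on_def)
  finally have 1: "C_a n y q = (\<Prod>k\<in>{2..n}. fC q (y 1 - y k)) * A" .
  have "C_a n (y \<circ> cyc n) q = (\<Prod>p\<in>Q1. fC q (y (cyc n (fst p)) - y (cyc n (snd p)))) *
       (\<Prod>p\<in>Q2. fC q (y (cyc n (fst p)) - y (cyc n (snd p))))"
    unfolding C_alt Q(1) by (subst prod.union_disjoint[OF _ fQ2 Q(2)]) (simp_all add: Q1_def)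
  also have "(\<Prod>p\<in>Q1. fC q (y (cyc n (fst p)) - y (cyc n (snd p)))) = (\<Prod>j\<in>{1..n-1}. fC q (y (Suc j) - y 1))"
    unfolding Q1_def by (subst prod.reindex) (auto simp: inj_on_def cyc_def intro!: prod.cong)
  also have "\<dots> = (\<Prod>k\<in>{2..n}. fC q (y k - y 1))"
  proof -
    have e: "{2..n} = {Suc 1..Suc (n - 1)}" using n by auto
    show ?thesis by (simp only: e prod.shift_bounds_cl_Suc_ivl)
  qed
  also have "(\<Prod>p\<in>Q2. fC q (y (cyc n (fst p)) - y (cyc n (snd p)))) = A"
  proof -
    define h where "h = (\<lambda>p::nat\<times>nat. (Suc (fst p), Suc (snd p)))"
    have bij: "bij_betw h Q2 P2"
      by (rule bij_betw_byWitness[of _ "\<lambda>p. (fst p - 1, snd p - 1)"]) (auto simp: h_def Q2_def P2_def)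
    have "(\<Prod>p\<in>Q2. fC q (y (cyc n (fst p)) - y (cyc n (snd p)))) = (\<Prod>p\<in>Q2. fC q (y (fst (h p)) - y (snd (h p))))"
      by (rule prod.cong) (auto simp: Q2_def cyc_def h_def)
    also have "\<dots> = A" unfolding A_def by (rule prod.reindex_bij_betw[OF bij])
    finally show ?thesis .
  qed
  finally show ?thesis using 1 by blast
qed



definition Tm :: "nat \<Rightarrow> real \<Rightarrow> (nat \<Rightarrow> real) \<Rightarrow> (nat \<Rightarrow> real) \<Rightarrow> (nat \<Rightarrow> nat) \<Rightarrow> complex" where
  "Tm n q xi b \<sigma> = C_a n (xi \<circ> \<sigma>) q * exp (\<i> * complex_of_real (\<Sum>j\<in>{1..n}. (xi \<circ> \<sigma>) j * b j))"

lemma P_Tm: "P_a n b xi q = (\<Sum>\<sigma>\<in>{\<sigma>. \<sigma> permutes {1..n}}. Tm n q xi b \<sigma>)"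
  by (simp add: P_a_def Tm_def)

lemma P_cong: "(\<And>j. j \<in> {1..n} \<Longrightarrow> a j = b j) \<Longrightarrow> P_a n a xi q = P_a n b xi q"
  unfolding P_a_def by (intro sum.cong refl) simp

lemma fC_zero: "exp (\<i> * complex_of_real th) = 1 \<Longrightarrow> fC q th = 0"
proof -
  assume h: "exp (\<i> * complex_of_real th) = 1"
  have "exp (- \<i> * complex_of_real th) = inverse (exp (\<i> * complex_of_real th))"
    by (simp add: exp_minus[symmetric])
  then have "exp (- \<i> * complex_of_real th) = 1" using h by simp
  then show ?thesis by (simp add: fC_def)
qed

lemma one_minus_qE: "\<bar>q\<bar> < 1 \<Longrightarrow> 1 - complex_of_real q * exp (\<i> * complex_of_real th) \<noteq> 0"
proof
  assume q: "\<bar>q\<bar> < 1" and h: "1 - complex_of_real q * exp (\<i> * complex_of_real th) = 0"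
  then have "norm (complex_of_real q * exp (\<i> * complex_of_real th)) = 1" by (metis norm_one right_minus_eq)
  then have "\<bar>q\<bar> = 1" by (simp add: norm_mult)
  then show False using q by simp
qed

lemma fC_swap:
  assumes q: "\<bar>q\<bar> < 1" and e: "exp (\<i> * complex_of_real th) \<noteq> 1"
  shows "fC q th = - exp (\<i> * complex_of_real (v_q q th)) * fC q (- th)"
proof -
  define E where "E = exp (\<i> * complex_of_real th)"
  have E0: "E \<noteq> 0" by (simp add: E_def)
  have em: "exp (- \<i> * complex_of_real th) = inverse E"
    by (simp add: E_def exp_minus[symmetric])
  have f1: "fC q th = (1 - q * inverse E)/(1 - inverse E)" by (simp only: fC_def em)
  have f2: "fC q (- th) = (1 - q * E)/(1 - E)" by (simp add: fC_def E_def)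
  show ?thesis unfolding f1 f2 exp_v_q[OF q] E_def[symmetric]
    by (rule swap_alg[OF E0 e[folded E_def] one_minus_qE[OF q, of th, folded E_def]])
qed

lemma sum_swap_diff:
  fixes y a :: "nat \<Rightarrow> real"
  assumes i: "1 \<le> i" "i < n" and a: "a (Suc i) = a i + 1"
  shows "(\<Sum>j\<in>{1..n}. y j * a j) = (\<Sum>j\<in>{1..n}. y j * (a \<circ> Transposition.transpose i (Suc i)) j) + (y (Suc i) - y i)"
proof -
  define s where "s = Transposition.transpose i (Suc i)"
  have "(\<Sum>j\<in>{1..n}. y j * a j) - (\<Sum>j\<in>{1..n}. y j * (a \<circ> s) j) = (\<Sum>j\<in>{1..n}. y j * (a j - a (s j)))"
    by (simp add: sum_subtractf[symmetric] algebra_simps)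
  also have "\<dots> = (\<Sum>j\<in>{i, Suc i}. y j * (a j - a (s j)))"
    by (rule sum.mono_neutral_right) (use i in \<open>auto simp: s_def Transposition.transpose_def\<close>)
  also have "\<dots> = y (Suc i) - y i" using a by (simp add: s_def algebra_simps)
  finally show ?thesis unfolding s_def by simp
qed

lemma P_straighten:
  assumes i: "1 \<le> i" "i < n" and a: "a (Suc i) = a i + 1"
  shows "P_a n a xi q = complex_of_real q * P_a n (a \<circ> Transposition.transpose i (Suc i)) xi q"
proof -
  define s where "s = Transposition.transpose i (Suc i)"
  define S where "S = {\<sigma>. \<sigma> permutes {1..n}}"
  have sp: "s permutes {1..n}" unfolding s_def by (rule permutes_swap_id) (use i in auto)
  have ss: "\<And>x. s (s x) = x" by (simp add: s_def)
  define G where "G = (\<lambda>\<sigma>. Tm n q xi a \<sigma> - complex_of_real q * Tm n q xi (a \<circ> s) \<sigma>)"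
  have key: "G \<sigma> + G (\<sigma> \<circ> s) = 0" for \<sigma>
  proof -
    define y where "y = xi \<circ> \<sigma>"
    obtain B where B: "C_a n y q = fC q (y i - y (Suc i)) * B"
        "C_a n (y \<circ> s) q = fC q (y (Suc i) - y i) * B"
      using C_swap[OF i, of y q] unfolding s_def by blast
    have e1: "(\<Sum>j\<in>{1..n}. (y \<circ> s) j * a j) = (\<Sum>j\<in>{1..n}. y j * (a \<circ> s) j)"
    proof -
      have "(\<Sum>j\<in>{1..n}. y j * (a \<circ> s) j) = (\<Sum>j\<in>{1..n}. ((\<lambda>j. y j * (a \<circ> s) j) \<circ> s) j)"
        by (rule sum.permute[OF sp])
      also have "\<dots> = (\<Sum>j\<in>{1..n}. (y \<circ> s) j * a j)"
        using ss by (simp add: o_def)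
      finally show ?thesis by simp
    qed
    have e2: "(\<Sum>j\<in>{1..n}. (y \<circ> s) j * (a \<circ> s) j) = (\<Sum>j\<in>{1..n}. y j * a j)"
      using sum.permute[OF sp, of "\<lambda>j. y j * a j"] by (simp add: o_def)
    have e3: "(\<Sum>j\<in>{1..n}. y j * a j) = (\<Sum>j\<in>{1..n}. y j * (a \<circ> s) j) + (y (Suc i) - y i)"
      unfolding s_def by (rule sum_swap_diff[OF i a])
    define E2 where "E2 = exp (\<i> * complex_of_real (\<Sum>j\<in>{1..n}. y j * (a \<circ> s) j))"
    define W where "W = exp (\<i> * complex_of_real (y (Suc i) - y i))"
    have W0: "W \<noteq> 0" by (simp add: W_def)
    have E1: "exp (\<i> * complex_of_real (\<Sum>j\<in>{1..n}. y j * a j)) = E2 * W"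
      unfolding e3 E2_def W_def by (simp add: distrib_left exp_add)
    have f1: "fC q (y i - y (Suc i)) = (1 - q * W) / (1 - W)"
      by (simp add: fC_def W_def algebra_simps)
    have f2: "fC q (y (Suc i) - y i) = (1 - q * inverse W) / (1 - inverse W)"
    proof -
      have "exp (- \<i> * complex_of_real (y (Suc i) - y i)) = inverse W"
        by (simp add: W_def exp_minus[symmetric])
      then show ?thesis by (simp add: fC_def)
    qed
    have so: "xi \<circ> (\<sigma> \<circ> s) = y \<circ> s" by (simp add: y_def o_assoc)
    have "G \<sigma> = B * E2 * (fC q (y i - y (Suc i)) * (W - q))"
      unfolding G_def Tm_def y_def[symmetric] B E1 E2_def[symmetric] by (simp add: algebra_simps)
    moreover have "G (\<sigma> \<circ> s) = B * E2 * (fC q (y (Suc i) - y i) * (1 - q * W))"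
      unfolding G_def Tm_def so B e1 e2 E1 E2_def[symmetric] by (simp add: algebra_simps)
    ultimately have "G \<sigma> + G (\<sigma> \<circ> s) = B * E2 * ((1 - q * W) / (1 - W) * (W - q) + (1 - q * inverse W) / (1 - inverse W) * (1 - q * W))"
      unfolding f1 f2 by (simp add: distrib_left)
    also have "\<dots> = 0" using straight_alg[OF W0, of q] by simp
    finally show ?thesis .
  qed
  have "sum G S = sum (\<lambda>\<sigma>. G (\<sigma> \<circ> s)) S"
    unfolding S_def by (rule sum_permutations_compose_right[OF sp])
  then have "2 * sum G S = sum (\<lambda>\<sigma>. G \<sigma> + G (\<sigma> \<circ> s)) S"
    by (simp add: sum.distrib)
  also have "\<dots> = 0" using key by simp
  finally have "sum G S = 0" by simp
  moreover have "sum G S = P_a n a xi q - complex_of_real q * P_a n (a \<circ> s) xi q"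
    unfolding G_def P_Tm S_def by (simp add: sum_subtractf sum_distrib_left)
  ultimately show ?thesis unfolding s_def by simp
qed



definition shiftw :: "nat \<Rightarrow> nat \<Rightarrow> (nat \<Rightarrow> real) \<Rightarrow> nat \<Rightarrow> real" where
  "shiftw n m a = (\<lambda>j. if j < n then a (Suc j) else a 1 - real m)"

lemma exp_i_add: "exp (\<i> * complex_of_real (A + B)) = exp (\<i> * complex_of_real A) * exp (\<i> * complex_of_real B)"
  by (simp add: distrib_left exp_add)

lemma lam_eps:
  assumes lam: "lam \<in> Lambda_a m n" and j: "j \<in> {1..n}"
  shows "exp (\<i> * complex_of_real (2 * pi * (lam j + rho_a n j))) =
         exp (\<i> * complex_of_real (2 * pi * (lam 1 + rho_a n 1)))"
proof -
  obtain l where l: "lam = (\<lambda>k. \<Sum>i\<in>{1..n-1}. real (l i) * fund_weight n i k)"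
    using lam unfolding Lambda_a_def by blast
  have n1: "1 \<le> n" using j by auto
  have "lam j - lam 1 = (\<Sum>i\<in>{1..n-1}. real (l i) * ((if j \<le> i then 1 else 0) - 1))"
    unfolding l sum_subtractf[symmetric]
    by (rule sum.cong) (use j n1 in \<open>auto simp: fund_weight_def algebra_simps\<close>)
  also have "\<dots> \<in> \<int>" by (intro Ints_sum Ints_mult) auto
  finally have d1: "lam j - lam 1 \<in> \<int>" .
  have d2: "rho_a n j - rho_a n 1 = 1 - real j" by (simp add: rho_a_def field_simps)
  define d where "d = (lam j + rho_a n j) - (lam 1 + rho_a n 1)"
  have dd: "d = (lam j - lam 1) + (1 - real j)" using d2 unfolding d_def by simp
  have dI: "d \<in> \<int>" unfolding dd by (rule Ints_add[OF d1]) (intro Ints_diff Ints_1 Ints_of_nat)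
  then obtain z where z: "d = of_int z" by (auto elim: Ints_cases)
  have "exp (\<i> * complex_of_real (2 * pi * (lam j + rho_a n j))) =
        exp (\<i> * complex_of_real (2 * pi * (lam 1 + rho_a n 1))) * exp (\<i> * (of_int z * (of_real pi * 2)))"
  proof -
    have e: "2 * pi * (lam j + rho_a n j) = 2 * pi * (lam 1 + rho_a n 1) + 2 * d * pi"
      unfolding d_def by (simp add: algebra_simps)
    have e2: "\<i> * complex_of_real (2 * d * pi) = \<i> * (of_int z * (of_real pi * 2))"
      by (simp add: z)
    show ?thesis unfolding e exp_i_add e2 ..
  qed
  also have "exp (\<i> * (of_int z * (of_real pi * 2))) = 1"
    by (rule exp_2pi_1_int)
  finally show ?thesis by simp
qed

lemma sum_last: "n \<ge> 1 \<Longrightarrow> sum g {1..n} = sum g {1..n-1} + g (n::nat)"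
  by (cases n) (auto simp: sum.cl_ivl_Suc)

lemma sum_cyc:
  assumes n: "n \<ge> 2"
  shows "(\<Sum>j\<in>{1..n}. y j * a j) = (\<Sum>j\<in>{1..n}. (y \<circ> cyc n) j * shiftw n m a j) + real m * y 1"
proof -
  obtain k where k: "n = Suc k" "k \<ge> 1" using n by (cases n) auto
  have L: "(\<Sum>j\<in>{1..n}. y j * a j) = y 1 * a 1 + (\<Sum>j\<in>{Suc 1..n}. y j * a j)"
    by (rule sum.atLeast_Suc_atMost) (use n in simp)
  have R1: "(\<Sum>j\<in>{1..n}. (y \<circ> cyc n) j * shiftw n m a j) =
      (\<Sum>j\<in>{1..k}. y (Suc j) * a (Suc j)) + y 1 * (a 1 - real m)"
  proof -
    have "(\<Sum>j\<in>{1..n}. (y \<circ> cyc n) j * shiftw n m a j) =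
      (\<Sum>j\<in>{1..k}. (y \<circ> cyc n) j * shiftw n m a j) + (y \<circ> cyc n) n * shiftw n m a n"
      unfolding k(1) by (rule sum.cl_ivl_Suc[THEN trans]) (use k in simp)
    also have "(\<Sum>j\<in>{1..k}. (y \<circ> cyc n) j * shiftw n m a j) = (\<Sum>j\<in>{1..k}. y (Suc j) * a (Suc j))"
      by (rule sum.cong) (use k in \<open>auto simp: cyc_def shiftw_def\<close>)
    also have "(y \<circ> cyc n) n * shiftw n m a n = y 1 * (a 1 - real m)"
      using n by (simp add: cyc_def shiftw_def)
    finally show ?thesis .
  qed
  have R2: "(\<Sum>j\<in>{1..k}. y (Suc j) * a (Suc j)) = (\<Sum>j\<in>{Suc 1..n}. y j * a j)"
    unfolding k(1) by (rule sum.shift_bounds_cl_Suc_ivl[symmetric])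
  have ar: "\<And>X. y 1 * a 1 + X = X + y 1 * (a 1 - real m) + real m * y 1" by (simp add: algebra_simps)
  show ?thesis unfolding L R1 R2 by (rule ar)
qed

lemma P_cycle:
  assumes n: "n \<ge> 2" and q: "\<bar>q\<bar> < 1" and node: "is_node m n q lam xi" and lam: "lam \<in> Lambda_a m n"
    and dist: "\<And>j k. j \<in> {1..n} \<Longrightarrow> k \<in> {1..n} \<Longrightarrow> j \<noteq> k \<Longrightarrow> exp (\<i> * complex_of_real (xi j - xi k)) \<noteq> 1"
  shows "\<exists>c. \<forall>a. P_a n a xi q = c * P_a n (shiftw n m a) xi q"
proof -
  define eps where "eps = exp (\<i> * complex_of_real (2 * pi * (lam 1 + rho_a n 1)))"
  define c where "c = (-1::complex)^(n-1) * eps"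
  have cp: "cyc n permutes {1..n}" using n by (intro cyc_permutes) simp
  have trm: "Tm n q xi a \<sigma> = c * Tm n q xi (shiftw n m a) (\<sigma> \<circ> cyc n)" if sp: "\<sigma> permutes {1..n}" for a \<sigma>
  proof -
    define y where "y = xi \<circ> \<sigma>"
    define j0 where "j0 = \<sigma> 1"
    have j0: "j0 \<in> {1..n}" unfolding j0_def using permutes_in_image[OF sp] n by simp
    obtain A where AA: "C_a n y q = (\<Prod>k\<in>{2..n}. fC q (y 1 - y k)) * A \<and>
        C_a n (y \<circ> cyc n) q = (\<Prod>k\<in>{2..n}. fC q (y k - y 1)) * A"
      using C_cyc[OF n, of y q] by (rule exE)
    note A = conjunct1[OF AA] conjunct2[OF AA]
    have ne: "exp (\<i> * complex_of_real (y 1 - y k)) \<noteq> 1" if k: "k \<in> {2..n}" for k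
    proof -
      have k1: "k \<noteq> 1" "k \<in> {1..n}" "(1::nat) \<in> {1..n}" using k n by simp_all
      have "\<sigma> 1 \<noteq> \<sigma> k"
      proof
        assume "\<sigma> 1 = \<sigma> k"
        then have "1 = k" by (rule injD[OF permutes_inj[OF sp]])
        then show False using k1(1) by simp
      qed
      moreover have "\<sigma> 1 \<in> {1..n}" "\<sigma> k \<in> {1..n}"
        by (simp_all only: permutes_in_image[OF sp] k1(2,3))
      ultimately show ?thesis unfolding y_def using dist by simp
    qed
    define V where "V = (\<Sum>k\<in>{2..n}. v_q q (y 1 - y k))"
    have P1: "(\<Prod>k\<in>{2..n}. fC q (y 1 - y k)) = (-1)^(n-1) * exp (\<i> * complex_of_real V) * (\<Prod>k\<in>{2..n}. fC q (y k - y 1))"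
    proof -
      have "(\<Prod>k\<in>{2..n}. fC q (y 1 - y k)) = (\<Prod>k\<in>{2..n}. (-1) * (exp (\<i> * complex_of_real (v_q q (y 1 - y k))) * fC q (y k - y 1)))"
        by (rule prod.cong) (use fC_swap[OF q ne] in auto)
      also have "\<dots> = (-1)^(card {2..n}) * ((\<Prod>k\<in>{2..n}. exp (\<i> * complex_of_real (v_q q (y 1 - y k)))) * (\<Prod>k\<in>{2..n}. fC q (y k - y 1)))"
        by (simp only: prod.distrib prod_constant)
      also have "(\<Prod>k\<in>{2..n}. exp (\<i> * complex_of_real (v_q q (y 1 - y k)))) = exp (\<i> * complex_of_real V)"
        unfolding V_def by (simp add: exp_sum[symmetric] of_real_sum sum_distrib_left)
      also have "card {2..n} = n - 1" by simp
      finally show ?thesis by (simp add: algebra_simps)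
    qed
    have Vn: "V = 2 * pi * (lam j0 + rho_a n j0) - real m * xi j0"
    proof -
      have "V = (\<Sum>k\<in>{1..n} - {j0}. v_q q (xi j0 - xi k))"
      proof -
        have img: "\<sigma> ` {2..n} = {1..n} - {j0}"
        proof -
          have "\<sigma> ` ({1..n} - {1}) = \<sigma> ` {1..n} - \<sigma> ` {1}"
            by (rule image_set_diff[OF permutes_inj[OF sp]])
          moreover have "{1..n} - {1} = {2..n}" by auto
          ultimately show ?thesis using permutes_image[OF sp] by (simp add: j0_def)
        qed
        have "(\<Sum>k\<in>{1..n} - {j0}. v_q q (xi j0 - xi k)) = (\<Sum>k\<in>{2..n}. v_q q (xi j0 - xi (\<sigma> k)))"
          unfolding img[symmetric] by (subst sum.reindex) (auto intro: inj_on_subset[OF permutes_inj_on[OF sp]])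
        then show ?thesis unfolding V_def y_def j0_def by simp
      qed
      then show ?thesis using node j0 unfolding is_node_def by (simp add: algebra_simps)
    qed
    have eps: "exp (\<i> * complex_of_real V) * exp (\<i> * complex_of_real (real m * y 1)) = eps"
    proof -
      have "exp (\<i> * complex_of_real V) * exp (\<i> * complex_of_real (real m * y 1)) =
          exp (\<i> * complex_of_real (V + real m * y 1))" by (rule exp_i_add[symmetric])
      also have "V + real m * y 1 = 2 * pi * (lam j0 + rho_a n j0)" unfolding Vn by (simp add: y_def j0_def)
      finally show ?thesis unfolding eps_def using lam_eps[OF lam j0] by simp
    qed
    have so: "xi \<circ> (\<sigma> \<circ> cyc n) = y \<circ> cyc n" by (simp add: y_def o_assoc)
    define EB where "EB = exp (\<i> * complex_of_real (\<Sum>j\<in>{1..n}. (y \<circ> cyc n) j * shiftw n m a j))"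
    have "Tm n q xi a \<sigma> = C_a n y q * (EB * exp (\<i> * complex_of_real (real m * y 1)))"
      unfolding Tm_def y_def[symmetric] EB_def sum_cyc[OF n, of y a m] exp_i_add ..
    also have "\<dots> = (-1)^(n-1) * (exp (\<i> * complex_of_real V) * exp (\<i> * complex_of_real (real m * y 1))) * (C_a n (y \<circ> cyc n) q * EB)"
      unfolding A P1 by (simp add: algebra_simps)
    also have "\<dots> = c * Tm n q xi (shiftw n m a) (\<sigma> \<circ> cyc n)"
      unfolding eps c_def Tm_def so EB_def by (simp add: algebra_simps)
    finally show ?thesis .
  qed
  show ?thesis
  proof (intro exI allI)
    fix a
    have "P_a n a xi q = (\<Sum>\<sigma>\<in>{\<sigma>. \<sigma> permutes {1..n}}. c * Tm n q xi (shiftw n m a) (\<sigma> \<circ> cyc n))"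
      unfolding P_Tm by (rule sum.cong) (auto simp: trm)
    also have "\<dots> = c * (\<Sum>\<sigma>\<in>{\<sigma>. \<sigma> permutes {1..n}}. Tm n q xi (shiftw n m a) (\<sigma> \<circ> cyc n))"
      by (simp add: sum_distrib_left)
    also have "(\<Sum>\<sigma>\<in>{\<sigma>. \<sigma> permutes {1..n}}. Tm n q xi (shiftw n m a) (\<sigma> \<circ> cyc n)) = P_a n (shiftw n m a) xi q"
      unfolding P_Tm by (rule sum_permutations_compose_right[OF cp, symmetric])
    finally show "P_a n a xi q = c * P_a n (shiftw n m a) xi q" .
  qed
qed



lemma P_degenerate:
  assumes j: "j \<in> {1..n}" and k: "k \<in> {1..n}" and jk: "j \<noteq> k"
    and e: "exp (\<i> * complex_of_real (xi j - xi k)) = 1"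
  shows "P_a n b xi q = 0"
proof -
  have e': "exp (\<i> * complex_of_real (xi k - xi j)) = 1"
  proof -
    have "exp (\<i> * complex_of_real (xi k - xi j)) = inverse (exp (\<i> * complex_of_real (xi j - xi k)))"
      by (simp add: exp_minus[symmetric] algebra_simps)
    then show ?thesis using e by simp
  qed
  have "C_a n (xi \<circ> \<sigma>) q = 0" if sp: "\<sigma> permutes {1..n}" for \<sigma>
  proof -
    define j' k' where "j' = inv \<sigma> j" and "k' = inv \<sigma> k"
    have sj: "\<sigma> j' = j" "\<sigma> k' = k" unfolding j'_def k'_def using permutes_inverses(1)[OF sp] by auto
    have ij: "j' \<in> {1..n}" "k' \<in> {1..n}" unfolding j'_def k'_def
      using permutes_in_image[OF permutes_inv[OF sp]] j k by auto
    have ne: "j' \<noteq> k'" using sj jk by auto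
    show ?thesis unfolding C_alt
    proof (rule prod_zero[OF finite_Pairs])
      show "\<exists>p\<in>Pairs n. fC q ((xi \<circ> \<sigma>) (fst p) - (xi \<circ> \<sigma>) (snd p)) = 0"
      proof (cases "j' < k'")
        case True
        then have "(j', k') \<in> Pairs n" using ij by (auto simp: Pairs_def)
        moreover have "fC q ((xi \<circ> \<sigma>) j' - (xi \<circ> \<sigma>) k') = 0" using sj e by (simp add: fC_zero)
        ultimately show ?thesis by force
      next
        case False
        then have "(k', j') \<in> Pairs n" using ij ne by (auto simp: Pairs_def)
        moreover have "fC q ((xi \<circ> \<sigma>) k' - (xi \<circ> \<sigma>) j') = 0" using sj e' by (simp add: fC_zero)
        ultimately show ?thesis by force
      qed
    qed
  qed
  then show ?thesis unfolding P_Tm Tm_def by simp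
qed

definition rotw :: "nat \<Rightarrow> nat \<Rightarrow> nat \<Rightarrow> (nat \<Rightarrow> real) \<Rightarrow> nat \<Rightarrow> real" where
  "rotw n m k a = (\<lambda>j. if j + k \<le> n then a (j + k) else a (j + k - n) - real m)"

lemma P_rot:
  assumes c: "\<And>a. P_a n a xi q = c * P_a n (shiftw n m a) xi q"
  shows "k \<le> n \<Longrightarrow> P_a n a xi q = c ^ k * P_a n (rotw n m k a) xi q"
proof (induction k)
  case 0
  show ?case by (simp, rule P_cong) (auto simp: rotw_def)
next
  case (Suc k)
  then have "P_a n a xi q = c ^ k * P_a n (rotw n m k a) xi q" by simp
  also have "P_a n (rotw n m k a) xi q = c * P_a n (shiftw n m (rotw n m k a)) xi q" by (rule c)
  also have "P_a n (shiftw n m (rotw n m k a)) xi q = P_a n (rotw n m (Suc k) a) xi q"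
    by (rule P_cong) (use Suc.prems in \<open>auto simp: shiftw_def rotw_def\<close>)
  finally show ?case by simp
qed

lemma P_bubble:
  assumes u: "1 \<le> u" "u + d \<le> n"
  shows "(\<And>j. u \<le> j \<Longrightarrow> j < u + d \<Longrightarrow> al j = r) \<Longrightarrow> al (u + d) = r + 1 \<Longrightarrow>
    P_a n al xi q = complex_of_real q ^ d *
      P_a n (\<lambda>j. if j = u then r + 1 else if u < j \<and> j \<le> u + d then r else al j) xi q"
  using u
proof (induction d arbitrary: al)
  case 0
  have "(\<lambda>j. if j = u then r + 1 else if u < j \<and> j \<le> u + 0 then r else al j) = al"
    using 0 by (auto simp: fun_eq_iff)
  then show ?case by simp
next
  case (Suc d)
  define i where "i = u + d"
  define s where "s = Transposition.transpose i (Suc i)"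
  have i: "1 \<le> i" "i < n" using Suc.prems unfolding i_def by auto
  have ai: "al (Suc i) = al i + 1" using Suc.prems unfolding i_def by auto
  have "P_a n al xi q = complex_of_real q * P_a n (al \<circ> s) xi q"
    unfolding s_def by (rule P_straighten[OF i ai])
  also have "P_a n (al \<circ> s) xi q = complex_of_real q ^ d *
      P_a n (\<lambda>j. if j = u then r + 1 else if u < j \<and> j \<le> u + d then r else (al \<circ> s) j) xi q"
    by (rule Suc.IH) (use Suc.prems in \<open>auto simp: s_def i_def Transposition.transpose_def\<close>)
  also have "(\<lambda>j. if j = u then r + 1 else if u < j \<and> j \<le> u + d then r else (al \<circ> s) j) =
      (\<lambda>j. if j = u then r + 1 else if u < j \<and> j \<le> u + Suc d then r else al j)"
    using Suc.prems by (auto simp: fun_eq_iff s_def i_def Transposition.transpose_def)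
  finally show ?case by simp
qed

definition Sv :: "nat \<Rightarrow> nat \<Rightarrow> (nat \<Rightarrow> real) \<Rightarrow> real \<Rightarrow> nat \<Rightarrow> nat \<Rightarrow> real" where
  "Sv t b M r i = (\<lambda>j. if j \<le> t then M j else if j \<le> t + i then r + 1 else if j \<le> t + i + b then r else r + 1)"

lemma P_block:
  assumes n: "t + a + b = n"
  shows "i \<le> a \<Longrightarrow> P_a n (Sv t b M r 0) xi q = complex_of_real q ^ (b * i) * P_a n (Sv t b M r i) xi q"
proof (induction i)
  case 0 then show ?case by simp
next
  case (Suc i)
  have "P_a n (Sv t b M r i) xi q = complex_of_real q ^ b *
      P_a n (\<lambda>j. if j = t + i + 1 then r + 1 else if t + i + 1 < j \<and> j \<le> t + i + 1 + b then r else Sv t b M r i j) xi q"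
    by (rule P_bubble) (use n Suc.prems in \<open>auto simp: Sv_def\<close>)
  also have "(\<lambda>j. if j = t + i + 1 then r + 1 else if t + i + 1 < j \<and> j \<le> t + i + 1 + b then r else Sv t b M r i j)
     = Sv t b M r (Suc i)"
    by (auto simp: fun_eq_iff Sv_def)
  finally show ?case using Suc by (simp add: power_add algebra_simps)
qed



lemma down_closed:
  assumes S: "S \<subseteq> {1..(n::nat)}" "1 \<in> S" and cl: "\<And>j i. j \<in> S \<Longrightarrow> 1 \<le> i \<Longrightarrow> i \<le> j \<Longrightarrow> i \<in> S"
  shows "S = {1..card S}"
proof -
  have f: "finite S" using S(1) finite_subset by blast
  define M where "M = Max S"
  have M: "M \<in> S" unfolding M_def using f S(2) by (intro Max_in) auto
  have "S = {1..M}"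
  proof
    show "S \<subseteq> {1..M}" using S(1) f M_def by (auto intro: Max_ge)
    show "{1..M} \<subseteq> S" using cl M by auto
  qed
  then show ?thesis by simp
qed

lemma up_closed:
  assumes S: "S \<subseteq> {1..(n::nat)}" "n \<in> S" and cl: "\<And>j i. j \<in> S \<Longrightarrow> j \<le> i \<Longrightarrow> i \<le> n \<Longrightarrow> i \<in> S"
  shows "1 \<le> card S \<and> (\<forall>j. n - card S < j \<and> j \<le> n \<longrightarrow> j \<in> S)"
proof -
  have f: "finite S" using S(1) finite_subset by blast
  define M where "M = Min S"
  have M: "M \<in> S" unfolding M_def using f S(2) by (intro Min_in) auto
  have M1: "1 \<le> M" using M S(1) by auto
  have "S = {M..n}"
  proof
    show "S \<subseteq> {M..n}" using S(1) f M_def by (auto intro: Min_le)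
    show "{M..n} \<subseteq> S" using cl M by auto
  qed
  then have "card S = n + 1 - M" by simp
  moreover have "M \<le> n" using M S(1) by auto
  ultimately show ?thesis using \<open>S = {M..n}\<close> M1 by auto
qed

lemma std_basis_sum1:
  assumes c: "c \<le> a" and k: "k \<in> {1..n}"
  shows "(\<Sum>j\<in>{1..c}. std_basis n (a + 1 - j) k) = (if a + 1 - c \<le> k \<and> k \<le> a then 1 else 0)"
proof -
  have "(\<Sum>j\<in>{1..c}. std_basis n (a + 1 - j) k) = (\<Sum>j\<in>{1..c}. if j = a + 1 - k then 1 else 0)"
    by (rule sum.cong) (use c k in \<open>auto simp: std_basis_def\<close>)
  also have "\<dots> = (if a + 1 - k \<in> {1..c} then 1 else 0)" by (rule sum.delta) simp
  also have "\<dots> = (if a + 1 - c \<le> k \<and> k \<le> a then 1 else 0)" using c k by auto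
  finally show ?thesis .
qed

lemma std_basis_sum2:
  assumes k: "k \<in> {1..n}" and b: "b \<le> n"
  shows "(\<Sum>j\<in>{1..c}. std_basis n (n - b + j) k) = (if n - b < k \<and> k \<le> n - b + c then 1 else 0)"
proof -
  have "(\<Sum>j\<in>{1..c}. std_basis n (n - b + j) k) = (\<Sum>j\<in>{1..c}. if j = k - (n - b) then 1 else 0)"
    by (rule sum.cong) (use k b in \<open>auto simp: std_basis_def\<close>)
  also have "\<dots> = (if k - (n - b) \<in> {1..c} then 1 else 0)" by (rule sum.delta) simp
  also have "\<dots> = (if n - b < k \<and> k \<le> n - b + c then 1 else 0)" using k b by auto
  finally show ?thesis .
qed

lemma omega_closed:
  assumes "multiplicity_in (mu 1) mu n = a" "multiplicity_in (mu n) mu n = b" "a + b \<le> n" and k: "k \<in> {1..n}"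
  shows "omega_mu n mu k = (if a + 1 - min a b \<le> k \<and> k \<le> a then 1 else 0) - (if n - b < k \<and> k \<le> n - b + min a b then 1 else 0)"
  unfolding omega_mu_def Let_def assms(1,2) sum_subtractf
  using std_basis_sum1[OF _ k, of "min a b" a] std_basis_sum2[OF k, of b "min a b"] assms(3) by simp

lemma mu_struct:
  assumes mu: "mu \<in> Lambda_a (m + 1) n - Lambda_a m n" and n: "n \<ge> 2"
  defines "a \<equiv> multiplicity_in (mu 1) mu n" and "b \<equiv> multiplicity_in (mu n) mu n"
  shows "mu 1 = mu n + real m + 1 \<and> 1 \<le> a \<and> 1 \<le> b \<and> a + b \<le> n \<and>
         (\<forall>j. 1 \<le> j \<and> j \<le> a \<longrightarrow> mu j = mu 1) \<and> (\<forall>j. n - b < j \<and> j \<le> n \<longrightarrow> mu j = mu n)"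
proof -
  obtain l where l: "mu = (\<lambda>k. \<Sum>i\<in>{1..n-1}. real (l i) * fund_weight n i k)" and ls: "(\<Sum>i\<in>{1..n-1}. l i) \<le> m + 1"
    using mu unfolding Lambda_a_def by blast
  have ls2: "(\<Sum>i\<in>{1..n-1}. l i) = m + 1"
  proof (rule ccontr)
    assume "(\<Sum>i\<in>{1..n-1}. l i) \<noteq> m + 1"
    then have "(\<Sum>i\<in>{1..n-1}. l i) \<le> m" using ls by simp
    then have "mu \<in> Lambda_a m n" unfolding Lambda_a_def l by blast
    then show False using mu by simp
  qed
  have diff: "mu j - mu k = (\<Sum>i\<in>{1..n-1}. real (l i) * ((if j \<le> i then 1 else 0) - (if k \<le> i then 1 else 0)))"
    if "j \<in> {1..n}" "k \<in> {1..n}" for j k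
    unfolding l sum_subtractf[symmetric]
    by (rule sum.cong) (use that in \<open>auto simp: fund_weight_def algebra_simps\<close>)
  have mono: "mu k \<le> mu j" if "1 \<le> j" "j \<le> k" "k \<le> n" for j k
  proof -
    have "0 \<le> (\<Sum>i\<in>{1..n-1}. real (l i) * ((if j \<le> i then 1 else 0) - (if k \<le> i then 1 else 0)))"
      by (rule sum_nonneg) (use that in auto)
    then show ?thesis using diff[of j k] that by simp
  qed
  have pr: "mu 1 - mu n = real m + 1"
  proof -
    have "mu 1 - mu n = (\<Sum>i\<in>{1..n-1}. real (l i) * ((if 1 \<le> i then 1 else 0) - (if n \<le> i then 1 else 0)))"
      by (rule diff) (use n in auto)
    also have "\<dots> = (\<Sum>i\<in>{1..n-1}. real (l i))"
      by (rule sum.cong) auto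
    also have "\<dots> = real m + 1" using arg_cong[OF ls2, of real] by simp
    finally show ?thesis .
  qed
  define A where "A = {j \<in> {1..n}. mu j = mu 1}"
  define B where "B = {j \<in> {1..n}. mu j = mu n}"
  have a: "a = card A" unfolding a_def A_def multiplicity_in_def by simp
  have b: "b = card B" unfolding b_def B_def multiplicity_in_def by simp
  have A: "A = {1..a}" unfolding a
  proof (rule down_closed[of _ n])
    show "A \<subseteq> {1..n}" "1 \<in> A" using n by (auto simp: A_def)
    fix j i assume "j \<in> A" "1 \<le> i" "i \<le> j"
    then show "i \<in> A" using mono[of 1 i] mono[of i j] by (force simp: A_def)
  qed
  have Bc: "1 \<le> card B \<and> (\<forall>j. n - card B < j \<and> j \<le> n \<longrightarrow> j \<in> B)"
  proof (rule up_closed)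
    show "B \<subseteq> {1..n}" "n \<in> B" using n by (auto simp: B_def)
    fix j i assume "j \<in> B" "j \<le> i" "i \<le> n"
    then show "i \<in> B" using mono[of j i] mono[of i n] by (force simp: B_def)
  qed
  have AB: "A \<inter> B = {}" using pr by (auto simp: A_def B_def)
  have "card A + card B \<le> n"
  proof -
    have "card A + card B = card (A \<union> B)" using AB by (simp add: card_Un_disjoint A_def B_def)
    also have "\<dots> \<le> card {1..n}" by (rule card_mono) (auto simp: A_def B_def)
    finally show ?thesis by simp
  qed
  then have f4: "a + b \<le> n" unfolding a b .
  have A1: "1 \<in> A" using n by (simp add: A_def)
  have f2: "1 \<le> a" using A1 unfolding A by simp
  have f5: "\<forall>j. 1 \<le> j \<and> j \<le> a \<longrightarrow> mu j = mu 1"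
  proof (intro allI impI)
    fix j assume "1 \<le> j \<and> j \<le> a"
    then have "j \<in> A" unfolding A by simp
    then show "mu j = mu 1" by (simp add: A_def)
  qed
  have f3: "1 \<le> b" using Bc unfolding b by simp
  have f6: "\<forall>j. n - b < j \<and> j \<le> n \<longrightarrow> mu j = mu n"
  proof (intro allI impI)
    fix j assume "n - b < j \<and> j \<le> n"
    then have "j \<in> B" using Bc unfolding b by blast
    then show "mu j = mu n" by (simp add: B_def)
  qed
  have f1: "mu 1 = mu n + real m + 1" using pr by simp
  show ?thesis using f1 f2 f3 f4 f5 f6 by blast
qed



theorem mainTheorem5:
  fixes n m :: nat and q :: real and lam mu xi :: "nat \<Rightarrow> real"
  assumes "n \<ge> 2" and "m > 0" and "-1 < q" and "q < 1"
    and "lam \<in> Lambda_a m n"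
    and "mu \<in> Lambda_a (m + 1) n - Lambda_a m n"
    and "is_node m n q lam xi"
  shows "Q_a n mu xi q = 0"
proof -
  note n = assms(1) and lam = assms(5) and muL = assms(6) and node = assms(7)
  have q: "\<bar>q\<bar> < 1" using assms(3,4) by auto
  define a where "a = multiplicity_in (mu 1) mu n"
  define b where "b = multiplicity_in (mu n) mu n"
  define om where "om = (\<lambda>k. mu k - omega_mu n mu k)"
  have Q: "Q_a n mu xi q = P_a n mu xi q - complex_of_real q ^ (a * b) * P_a n om xi q"
    unfolding Q_a_def a_def b_def om_def by simp
  show ?thesis
  proof (cases "\<exists>j\<in>{1..n}. \<exists>k\<in>{1..n}. j \<noteq> k \<and> exp (\<i> * complex_of_real (xi j - xi k)) = 1")
    case True
    then obtain j k where jk: "j \<in> {1..n}" "k \<in> {1..n}" "j \<noteq> k" "exp (\<i> * complex_of_real (xi j - xi k)) = 1"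
      by blast
    show ?thesis unfolding Q using P_degenerate[OF jk] by simp
  next
    case False
    then have dist: "\<And>j k. j \<in> {1..n} \<Longrightarrow> k \<in> {1..n} \<Longrightarrow> j \<noteq> k \<Longrightarrow> exp (\<i> * complex_of_real (xi j - xi k)) \<noteq> 1"
      by blast
    obtain c where c: "\<And>al. P_a n al xi q = c * P_a n (shiftw n m al) xi q"
      using P_cycle[OF n q node lam dist] by blast
    have ms: "mu 1 = mu n + real m + 1 \<and> 1 \<le> a \<and> 1 \<le> b \<and> a + b \<le> n \<and>
         (\<forall>j. 1 \<le> j \<and> j \<le> a \<longrightarrow> mu j = mu 1) \<and> (\<forall>j. n - b < j \<and> j \<le> n \<longrightarrow> mu j = mu n)"
      unfolding a_def b_def by (rule mu_struct[OF muL n])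
    then have pr: "mu 1 = mu n + real m + 1" and a1: "1 \<le> a" and b1: "1 \<le> b" and ab: "a + b \<le> n"
      and fa: "\<And>j. 1 \<le> j \<Longrightarrow> j \<le> a \<Longrightarrow> mu j = mu 1"
      and fb: "\<And>j. n - b < j \<Longrightarrow> j \<le> n \<Longrightarrow> mu j = mu n" by blast+
    define t where "t = n - a - b"
    define M where "M = (\<lambda>j. mu (j + a))"
    define r where "r = mu n"
    have tab: "t + a + b = n" using ab unfolding t_def by simp
    have E1: "rotw n m a mu j = Sv t b M r 0 j" if j: "j \<in> {1..n}" for j
    proof (cases "j + a \<le> n")
      case True
      show ?thesis
      proof (cases "j \<le> t")
        case True then show ?thesis using \<open>j + a \<le> n\<close> by (simp add: rotw_def Sv_def M_def)
      next
        case False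
        then have "mu (j + a) = r" unfolding r_def by (rule_tac fb) (use \<open>j + a \<le> n\<close> tab in auto)
        then show ?thesis using False \<open>j + a \<le> n\<close> tab by (simp add: rotw_def Sv_def)
      qed
    next
      case False
      then have "mu (j + a - n) = mu 1" using j tab by (intro fa) auto
      then show ?thesis using False j tab pr by (simp add: rotw_def Sv_def r_def)
    qed
    have omc: "omega_mu n mu k = (if a + 1 - min a b \<le> k \<and> k \<le> a then 1 else 0) - (if n - b < k \<and> k \<le> n - b + min a b then 1 else 0)"
      if "k \<in> {1..n}" for k
      by (rule omega_closed) (use a_def b_def ab that in auto)
    have E2: "rotw n m a om j = Sv t b M r a j" if j: "j \<in> {1..n}" for j
    proof (cases "j + a \<le> n")
      case True
      have k: "j + a \<in> {1..n}" using True j by auto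
      show ?thesis
      proof (cases "j \<le> t")
        case True
        then have "omega_mu n mu (j + a) = 0" using omc[OF k] tab j by auto
        then show ?thesis using True \<open>j + a \<le> n\<close> by (simp add: rotw_def Sv_def M_def om_def)
      next
        case False
        then have mr: "mu (j + a) = r" unfolding r_def by (rule_tac fb) (use \<open>j + a \<le> n\<close> tab in auto)
        have "omega_mu n mu (j + a) = - (if j \<le> t + a then 1 else 0)"
          using omc[OF k] tab False True by (auto simp: min_def)
        then show ?thesis using False \<open>j + a \<le> n\<close> tab mr by (auto simp: rotw_def Sv_def om_def)
      qed
    next
      case False
      have k: "j + a - n \<in> {1..n}" using False j tab by auto
      have mp: "mu (j + a - n) = mu 1" using j tab False by (intro fa) auto
      have "omega_mu n mu (j + a - n) = (if j \<le> t + a then 0 else 1)"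
        using omc[OF k] tab False j by (auto simp: min_def)
      then show ?thesis using False j tab pr mp by (auto simp: rotw_def Sv_def r_def om_def)
    qed
    have aN: "a \<le> n" using ab by simp
    have "P_a n mu xi q = c ^ a * P_a n (rotw n m a mu) xi q" by (rule P_rot[OF c aN])
    also have "P_a n (rotw n m a mu) xi q = P_a n (Sv t b M r 0) xi q" by (rule P_cong) (rule E1)
    also have "P_a n (Sv t b M r 0) xi q = complex_of_real q ^ (b * a) * P_a n (Sv t b M r a) xi q"
      by (rule P_block[OF tab]) simp
    finally have 1: "P_a n mu xi q = c ^ a * (complex_of_real q ^ (b * a) * P_a n (Sv t b M r a) xi q)" .
    have "P_a n om xi q = c ^ a * P_a n (rotw n m a om) xi q" by (rule P_rot[OF c aN])
    also have "P_a n (rotw n m a om) xi q = P_a n (Sv t b M r a) xi q" by (rule P_cong) (rule E2)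
    finally have 2: "P_a n om xi q = c ^ a * P_a n (Sv t b M r a) xi q" .
    show ?thesis unfolding Q 1 2 by (simp add: mult.commute mult.left_commute)
  qed
qed

end
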